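(* Let $G$ be a torsion-free group, $\mathbb{F}$ a field, $\alpha$ a zero divisor in $\mathbb{F}[G]$ with $|supp(\alpha)|=4$ and $|S_\alpha|=12$, and let $\beta$ be a non-zero element of $\mathbb{F}[G]$ with $\alpha\beta=0$. Then $Z(\alpha,\beta)$ is the induced subgraph on the vertex set $supp(\beta)$ of the Cayley graph of $G$ with respect to $S_\alpha$.
   Context: $supp(\gamma)=\{x\in G:\gamma_x\ne0\}$; $S_\alpha=\{h^{-1}h':h\ne h',\ h,h'\in supp(\alpha)\}$. The zero-divisor graph $Z(\alpha,\beta)$ is the multigraph with vertex set $supp(\beta)$ whose edges are the sets $\{(h,h',g,g'),(h',h,g',g)\}$ with $h,h'\in supp(\alpha)$, $g,g'\in supp(\beta)$, $g\ne g'$, $hg=h'g'$, each joining $g$ and $g'$. The Cayley graph of $G$ with respect to an inverse-closed $S\not\ni1$ is the simple graph on $G$ in which $x,y$ are adjacent iff $xy^{-1}\in S$. *)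

theory Defs
  imports "HOL-Algebra.Group"
begin

text \<open>Group algebra F[G]: finitely supported functions from the carrier of G to a field.
  Elements are represented as functions 'g => 'f vanishing outside a finite subset of carrier G.\<close>

definition supp :: "('g \<Rightarrow> 'f::zero) \<Rightarrow> 'g set" where
  "supp a = {x. a x \<noteq> 0}"

definition in_group_ring :: "('g, 'b) monoid_scheme \<Rightarrow> ('g \<Rightarrow> 'f::zero) \<Rightarrow> bool" where
  "in_group_ring G a \<longleftrightarrow> finite (supp a) \<and> supp a \<subseteq> carrier G"

definition gr_mult :: "('g, 'b) monoid_scheme \<Rightarrow> ('g \<Rightarrow> 'f::field) \<Rightarrow> ('g \<Rightarrow> 'f) \<Rightarrow> 'g \<Rightarrow> 'f" where
  "gr_mult G a b x = (if x \<in> carrier G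
      then (\<Sum>h\<in>supp a. a h * b (inv\<^bsub>G\<^esub> h \<otimes>\<^bsub>G\<^esub> x)) else 0)"

definition zero_divisor :: "('g, 'b) monoid_scheme \<Rightarrow> ('g \<Rightarrow> 'f::field) \<Rightarrow> bool" where
  "zero_divisor G a \<longleftrightarrow> in_group_ring G a \<and> a \<noteq> (\<lambda>_. 0) \<and>
     (\<exists>b. in_group_ring G b \<and> b \<noteq> (\<lambda>_. 0) \<and>
          (gr_mult G a b = (\<lambda>_. 0) \<or> gr_mult G b a = (\<lambda>_. 0)))"

definition torsion_free :: "('g, 'b) monoid_scheme \<Rightarrow> bool" where
  "torsion_free G \<longleftrightarrow> (\<forall>x\<in>carrier G. x \<noteq> \<one>\<^bsub>G\<^esub> \<longrightarrow> (\<forall>n::nat. n > 0 \<longrightarrow> x [^]\<^bsub>G\<^esub> n \<noteq> \<one>\<^bsub>G\<^esub>))"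

definition S_set :: "('g, 'b) monoid_scheme \<Rightarrow> ('g \<Rightarrow> 'f::zero) \<Rightarrow> 'g set" where
  "S_set G a = {inv\<^bsub>G\<^esub> h \<otimes>\<^bsub>G\<^esub> h' | h h'. h \<noteq> h' \<and> h \<in> supp a \<and> h' \<in> supp a}"

definition zd_edges :: "('g, 'b) monoid_scheme \<Rightarrow> ('g \<Rightarrow> 'f::zero) \<Rightarrow> ('g \<Rightarrow> 'f) \<Rightarrow> ('g \<times> 'g \<times> 'g \<times> 'g) set set" where
  "zd_edges G a b = {{(h, h', g, g'), (h', h, g', g)} | h h' g g'.
      h \<in> supp a \<and> h' \<in> supp a \<and> g \<in> supp b \<and> g' \<in> supp b \<and> g \<noteq> g' \<and>
      h \<otimes>\<^bsub>G\<^esub> g = h' \<otimes>\<^bsub>G\<^esub> g'}"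

definition edge_ends :: "('g \<times> 'g \<times> 'g \<times> 'g) set \<Rightarrow> 'g set" where
  "edge_ends e = (\<lambda>(h, h', g, g'). g) ` e"

definition zd_mult :: "('g, 'b) monoid_scheme \<Rightarrow> ('g \<Rightarrow> 'f::zero) \<Rightarrow> ('g \<Rightarrow> 'f) \<Rightarrow> 'g \<Rightarrow> 'g \<Rightarrow> nat" where
  "zd_mult G a b x y = card {e \<in> zd_edges G a b. edge_ends e = {x, y}}"

definition cayley_adj :: "('g, 'b) monoid_scheme \<Rightarrow> 'g set \<Rightarrow> 'g \<Rightarrow> 'g \<Rightarrow> bool" where
  "cayley_adj G S x y \<longleftrightarrow> x \<otimes>\<^bsub>G\<^esub> inv\<^bsub>G\<^esub> y \<in> S"

end

theory Submission
  imports Defs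
begin

lemma (in group) eq_shift: "k\<in>carrier G \<Longrightarrow> k'\<in>carrier G \<Longrightarrow> g\<in>carrier G \<Longrightarrow> g'\<in>carrier G \<Longrightarrow>
  (k \<otimes> g = k' \<otimes> g') = (inv k \<otimes> k' = g \<otimes> inv g')"
proof -
  assume a: "k\<in>carrier G" "k'\<in>carrier G" "g\<in>carrier G" "g'\<in>carrier G"
  have "(inv k \<otimes> k' = g \<otimes> inv g') = (g = (inv k \<otimes> k') \<otimes> g')"
    using inv_solve_right[of "inv k \<otimes> k'" g g'] a by auto
  also have "\<dots> = (g = inv k \<otimes> (k' \<otimes> g'))" using a by (simp add: m_assoc)
  also have "\<dots> = (k' \<otimes> g' = k \<otimes> g)" using inv_solve_left[of g k "k' \<otimes> g'"] a by auto
  finally show ?thesis by auto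
qed

lemma card_offdiag:
  assumes "finite A" "card A = 4"
  shows "card {(h, h'). h \<noteq> h' \<and> h \<in> A \<and> h' \<in> A} = 12"
proof -
  have eq: "{(h, h'). h \<noteq> h' \<and> h \<in> A \<and> h' \<in> A} = A \<times> A - (\<lambda>a. (a,a)) ` A" by auto
  have "card ((\<lambda>a. (a,a)) ` A) = 4" using assms by (simp add: card_image inj_on_def)
  moreover have "card (A \<times> A) = 16" using assms by (simp add: card_cartesian_product)
  ultimately show ?thesis unfolding eq
    by (subst card_Diff_subset) (use assms in auto)
qed

theorem mainTheorem10:
  fixes G :: "('g, 'b) monoid_scheme" and \<alpha> \<beta> :: "'g \<Rightarrow> 'f::field"
  assumes "group G" and "torsion_free G"
    and "zero_divisor G \<alpha>" and "card (supp \<alpha>) = 4" and "card (S_set G \<alpha>) = 12"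
    and "in_group_ring G \<beta>" and "\<beta> \<noteq> (\<lambda>_. 0)" and "gr_mult G \<alpha> \<beta> = (\<lambda>_. 0)"
  shows "\<forall>x\<in>supp \<beta>. \<forall>y\<in>supp \<beta>. x \<noteq> y \<longrightarrow>
           zd_mult G \<alpha> \<beta> x y = (if cayley_adj G (S_set G \<alpha>) x y then 1 else 0)"
proof (intro ballI impI)
  interpret group G by fact
  have sa: "supp \<alpha> \<subseteq> carrier G" "finite (supp \<alpha>)"
    using assms(3) by (auto simp: zero_divisor_def in_group_ring_def)
  have sb: "supp \<beta> \<subseteq> carrier G" using assms(6) by (auto simp: in_group_ring_def)
  define P where "P = {(h, h'). h \<noteq> h' \<and> h \<in> supp \<alpha> \<and> h' \<in> supp \<alpha>}"
  define f where "f = (\<lambda>(h, h'). inv\<^bsub>G\<^esub> h \<otimes>\<^bsub>G\<^esub> h')"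
  have SP: "S_set G \<alpha> = f ` P" unfolding S_set_def P_def f_def by auto
  have finP: "finite P" unfolding P_def
    by (rule finite_subset[of _ "supp \<alpha> \<times> supp \<alpha>"]) (use sa in auto)
  have cP: "card P = 12" unfolding P_def using card_offdiag sa assms(4) by blast
  have injP: "inj_on f P"
    by (rule eq_card_imp_inj_on[OF finP]) (use SP assms(5) cP in simp)
  have inj: "k = h \<and> k' = h'" if "k \<noteq> k'" "k \<in> supp \<alpha>" "k' \<in> supp \<alpha>" "h \<noteq> h'" "h \<in> supp \<alpha>" "h' \<in> supp \<alpha>"
     "inv\<^bsub>G\<^esub> k \<otimes>\<^bsub>G\<^esub> k' = inv\<^bsub>G\<^esub> h \<otimes>\<^bsub>G\<^esub> h'" for k k' h h'
  proof -
    have "f (k, k') = f (h, h')" using that(7) by (simp add: f_def)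
    moreover have "(k, k') \<in> P" "(h, h') \<in> P" using that(1-6) by (simp_all add: P_def)
    ultimately have "(k, k') = (h, h')" by (rule inj_onD[OF injP])
    then show ?thesis by simp
  qed
  fix x y assume x: "x \<in> supp \<beta>" and y: "y \<in> supp \<beta>" and xy: "x \<noteq> y"
  have xc: "x \<in> carrier G" and yc: "y \<in> carrier G" using x y sb by auto
  let ?E = "{e \<in> zd_edges G \<alpha> \<beta>. edge_ends e = {x, y}}"
  have edge: "\<exists>k k' g g'. e = {(k, k', g, g'), (k', k, g', g)} \<and> k \<noteq> k' \<and> k \<in> supp \<alpha> \<and> k' \<in> supp \<alpha> \<and>
      ((g = x \<and> g' = y \<and> inv\<^bsub>G\<^esub> k \<otimes>\<^bsub>G\<^esub> k' = x \<otimes>\<^bsub>G\<^esub> inv\<^bsub>G\<^esub> y) \<or> (g = y \<and> g' = x \<and> inv\<^bsub>G\<^esub> k' \<otimes>\<^bsub>G\<^esub> k = x \<otimes>\<^bsub>G\<^esub> inv\<^bsub>G\<^esub> y))"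
    if "e \<in> ?E" for e
  proof -
    from that obtain k k' g g' where e: "e = {(k, k', g, g'), (k', k, g', g)}"
      and k: "k \<in> supp \<alpha>" "k' \<in> supp \<alpha>" and g: "g \<in> supp \<beta>" "g' \<in> supp \<beta>" "g \<noteq> g'"
      and eq: "k \<otimes>\<^bsub>G\<^esub> g = k' \<otimes>\<^bsub>G\<^esub> g'" and ends: "edge_ends e = {x, y}"
      unfolding zd_edges_def by blast
    have kc: "k \<in> carrier G" "k' \<in> carrier G" using k sa by auto
    have gc: "g \<in> carrier G" "g' \<in> carrier G" using g sb by auto
    have "k \<noteq> k'"
    proof
      assume "k = k'"
      then have "g = g'" using eq kc gc by simp
      then show False using g(3) by simp
    qed
    moreover have gg: "{g, g'} = {x, y}" using ends e unfolding edge_ends_def by auto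
    moreover have e1: "inv\<^bsub>G\<^esub> k \<otimes>\<^bsub>G\<^esub> k' = g \<otimes>\<^bsub>G\<^esub> inv\<^bsub>G\<^esub> g'" using eq_shift[OF kc gc] eq by simp
    moreover have e2: "inv\<^bsub>G\<^esub> k' \<otimes>\<^bsub>G\<^esub> k = g' \<otimes>\<^bsub>G\<^esub> inv\<^bsub>G\<^esub> g" using eq_shift[OF kc(2) kc(1) gc(2) gc(1)] eq by simp
    moreover have "(g = x \<and> g' = y) \<or> (g = y \<and> g' = x)" using gg g(3) by (metis doubleton_eq_iff)
    ultimately show ?thesis using e k by blast
  qed
  show "zd_mult G \<alpha> \<beta> x y = (if cayley_adj G (S_set G \<alpha>) x y then 1 else 0)"
  proof (cases "cayley_adj G (S_set G \<alpha>) x y")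
    case True
    then obtain h h' where hh: "h \<noteq> h'" "h \<in> supp \<alpha>" "h' \<in> supp \<alpha>" and hx: "inv\<^bsub>G\<^esub> h \<otimes>\<^bsub>G\<^esub> h' = x \<otimes>\<^bsub>G\<^esub> inv\<^bsub>G\<^esub> y"
      unfolding cayley_adj_def S_set_def by auto
    have hc: "h \<in> carrier G" "h' \<in> carrier G" using hh sa by auto
    define E0 where "E0 = {(h, h', x, y), (h', h, y, x)}"
    have "?E = {E0}"
    proof
      show "?E \<subseteq> {E0}"
      proof
        fix e assume "e \<in> ?E"
        from edge[OF this] obtain k k' g g' where e: "e = {(k, k', g, g'), (k', k, g', g)}" and
          k: "k \<noteq> k'" "k \<in> supp \<alpha>" "k' \<in> supp \<alpha>" and
          c: "(g = x \<and> g' = y \<and> inv\<^bsub>G\<^esub> k \<otimes>\<^bsub>G\<^esub> k' = x \<otimes>\<^bsub>G\<^esub> inv\<^bsub>G\<^esub> y) \<or> (g = y \<and> g' = x \<and> inv\<^bsub>G\<^esub> k' \<otimes>\<^bsub>G\<^esub> k = x \<otimes>\<^bsub>G\<^esub> inv\<^bsub>G\<^esub> y)"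
          by blast
        from c show "e \<in> {E0}"
        proof
          assume c: "g = x \<and> g' = y \<and> inv\<^bsub>G\<^esub> k \<otimes>\<^bsub>G\<^esub> k' = x \<otimes>\<^bsub>G\<^esub> inv\<^bsub>G\<^esub> y"
          then have "k = h \<and> k' = h'" using inj[OF k hh] hx by simp
          then show ?thesis using e c E0_def by auto
        next
          assume c: "g = y \<and> g' = x \<and> inv\<^bsub>G\<^esub> k' \<otimes>\<^bsub>G\<^esub> k = x \<otimes>\<^bsub>G\<^esub> inv\<^bsub>G\<^esub> y"
          then have "k' = h \<and> k = h'" using inj[of k' k, OF _ k(3) k(2) hh] k hx by auto
          then show ?thesis using e c E0_def by auto
        qed
      qed
    next
      have "h \<otimes>\<^bsub>G\<^esub> x = h' \<otimes>\<^bsub>G\<^esub> y" using eq_shift[OF hc xc yc] hx by simp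
      then have "E0 \<in> zd_edges G \<alpha> \<beta>" unfolding zd_edges_def E0_def using hh x y xy by blast
      moreover have "edge_ends E0 = {x, y}" unfolding E0_def edge_ends_def by auto
      ultimately show "{E0} \<subseteq> ?E" by auto
    qed
    then show ?thesis using True unfolding zd_mult_def by simp
  next
    case False
    have "?E = {}"
    proof (rule ccontr)
      assume "?E \<noteq> {}"
      then obtain e where "e \<in> ?E" by blast
      from edge[OF this] obtain k k' where
          k: "k \<noteq> k'" "k \<in> supp \<alpha>" "k' \<in> supp \<alpha>" and
          c: "inv\<^bsub>G\<^esub> k \<otimes>\<^bsub>G\<^esub> k' = x \<otimes>\<^bsub>G\<^esub> inv\<^bsub>G\<^esub> y \<or> inv\<^bsub>G\<^esub> k' \<otimes>\<^bsub>G\<^esub> k = x \<otimes>\<^bsub>G\<^esub> inv\<^bsub>G\<^esub> y"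
          by blast
      have "x \<otimes>\<^bsub>G\<^esub> inv\<^bsub>G\<^esub> y \<in> S_set G \<alpha>"
        using c
      proof
        assume "inv\<^bsub>G\<^esub> k \<otimes>\<^bsub>G\<^esub> k' = x \<otimes>\<^bsub>G\<^esub> inv\<^bsub>G\<^esub> y"
        then show ?thesis unfolding S_set_def using k by (intro CollectI exI[of _ k] exI[of _ k']) simp
      next
        assume "inv\<^bsub>G\<^esub> k' \<otimes>\<^bsub>G\<^esub> k = x \<otimes>\<^bsub>G\<^esub> inv\<^bsub>G\<^esub> y"
        then show ?thesis unfolding S_set_def using k by (intro CollectI exI[of _ k'] exI[of _ k]) auto
      qed
      then show False using False unfolding cayley_adj_def by simp
    qed
    then have "card ?E = 0" by (simp only: card.empty)
    then show ?thesis using False unfolding zd_mult_def by simp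
  qed
qed

end
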